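(* Let $n\ge1$, $\mathcal{N}=\mathbb{C}^{2^n}$. For every $\phi\in\mathcal{N}$, every $i\in[n]$ and every $S\subseteq\{0,1\}^{n-1}$, $$|\phi^*E_{i,S}\phi-\phi^*\phi|\le 2^{n-1}I_i(\phi).$$
   Context: A vector $\phi=\sum_x\phi(x)|x\rangle\in\mathcal{N}$ is identified with the function $\phi:\{0,1\}^n\to\mathbb{C}$. $I_i(\phi)=\mathbb{E}_{x\in\{0,1\}^n}|\phi(x)-\phi(x\oplus e_i)|^2$, with $e_i$ the $i$-th unit vector. $E_{i,S}$ is the linear operator with $E_{i,S}|x\rangle=|x\oplus e_i\rangle$ if $(x_1,\dots,x_{i-1},x_{i+1},\dots,x_n)\in S$ and $E_{i,S}|x\rangle=|x\rangle$ otherwise. *)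

theory Defs
  imports Complex_Main
begin

text \<open>The Boolean cube \<open>{0,1}^n\<close>, realised as bit lists of length n
  (True = 1). A vector \<open>\<phi>\<in>\<complex>^(2^n)\<close> is a function on the cube.
  Coordinates are indexed 1..n as in the paper.\<close>

definition cube :: "nat \<Rightarrow> bool list set" where
  "cube n = {x. length x = n}"

definition flip :: "nat \<Rightarrow> bool list \<Rightarrow> bool list" where
  "flip i x = x[i - 1 := \<not> x ! (i - 1)]"

definition drop_coord :: "nat \<Rightarrow> bool list \<Rightarrow> bool list" where
  "drop_coord i x = take (i - 1) x @ drop i x"

definition influence :: "nat \<Rightarrow> nat \<Rightarrow> (bool list \<Rightarrow> complex) \<Rightarrow> real" where
  "influence n i \<phi> =
     (\<Sum>x\<in>cube n. (cmod (\<phi> x - \<phi> (flip i x)))\<^sup>2) / 2 ^ n"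

definition E_map :: "nat \<Rightarrow> bool list set \<Rightarrow> bool list \<Rightarrow> bool list" where
  "E_map i S x = (if drop_coord i x \<in> S then flip i x else x)"

text \<open>Matrix entries \<open><z|E_{i,S}|x>\<close>.\<close>
definition E_op :: "nat \<Rightarrow> bool list set \<Rightarrow> bool list \<Rightarrow> bool list \<Rightarrow> complex" where
  "E_op i S z x = (if z = E_map i S x then 1 else 0)"

definition qform :: "nat \<Rightarrow> (bool list \<Rightarrow> bool list \<Rightarrow> complex) \<Rightarrow> (bool list \<Rightarrow> complex) \<Rightarrow> complex" where
  "qform n M \<phi> = (\<Sum>z\<in>cube n. \<Sum>x\<in>cube n. cnj (\<phi> z) * M z x * \<phi> x)"

definition sqnorm :: "nat \<Rightarrow> (bool list \<Rightarrow> complex) \<Rightarrow> complex" where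
  "sqnorm n \<phi> = (\<Sum>x\<in>cube n. cnj (\<phi> x) * \<phi> x)"

end

theory Submission
  imports Defs
begin

lemma flip_cube: "x \<in> cube n \<Longrightarrow> flip i x \<in> cube n"
  by (simp add: cube_def flip_def)

lemma flip_flip: "flip i (flip i x) = x"
  by (cases "i - 1 < length x") (simp_all add: flip_def list_update_beyond)

lemma drop_flip: "i \<ge> 1 \<Longrightarrow> drop_coord i (flip i x) = drop_coord i x"
  by (simp add: drop_coord_def flip_def)

lemma Emap_cube: "x \<in> cube n \<Longrightarrow> E_map i S x \<in> cube n"
  by (simp add: E_map_def flip_cube)

theorem lemma1:
  fixes n i :: nat and \<phi> :: "bool list \<Rightarrow> complex" and S :: "bool list set"
  assumes "n \<ge> 1" and "i \<in> {1..n}" and "S \<subseteq> cube (n - 1)"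
  shows "cmod (qform n (E_op i S) \<phi> - sqnorm n \<phi>) \<le> 2 ^ (n - 1) * influence n i \<phi>"
proof -
  have i1: "i \<ge> 1" using assms(2) by simp
  have fin: "finite (cube n)"
  proof -
    have "cube n = {xs. set xs \<subseteq> UNIV \<and> length xs = n}" by (simp add: cube_def)
    thus ?thesis using finite_lists_length_eq[of "UNIV::bool set" n] by simp
  qed
  define T where "T = {x \<in> cube n. drop_coord i x \<in> S}"
  have finT: "finite T" using fin by (simp add: T_def)
  define g where "g x = cnj (\<phi> (flip i x) - \<phi> x) * \<phi> x" for x
  have q: "qform n (E_op i S) \<phi> = (\<Sum>x\<in>cube n. cnj (\<phi> (E_map i S x)) * \<phi> x)"
  proof -
    have "qform n (E_op i S) \<phi> = (\<Sum>x\<in>cube n. \<Sum>z\<in>cube n. cnj (\<phi> z) * E_op i S z x * \<phi> x)"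
      unfolding qform_def by (rule sum.swap)
    also have "\<dots> = (\<Sum>x\<in>cube n. cnj (\<phi> (E_map i S x)) * \<phi> x)"
    proof (rule sum.cong[OF refl])
      fix x assume x: "x \<in> cube n"
      have "(\<Sum>z\<in>cube n. cnj (\<phi> z) * E_op i S z x * \<phi> x)
          = (\<Sum>z\<in>cube n. if z = E_map i S x then cnj (\<phi> z) * \<phi> x else 0)"
        by (rule sum.cong) (auto simp: E_op_def)
      also have "\<dots> = cnj (\<phi> (E_map i S x)) * \<phi> x"
        using fin Emap_cube[OF x] by (simp add: sum.delta')
      finally show "(\<Sum>z\<in>cube n. cnj (\<phi> z) * E_op i S z x * \<phi> x) = cnj (\<phi> (E_map i S x)) * \<phi> x" .
    qed
    finally show ?thesis .
  qed
  have d: "qform n (E_op i S) \<phi> - sqnorm n \<phi> = sum g T"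
  proof -
    have "qform n (E_op i S) \<phi> - sqnorm n \<phi>
        = (\<Sum>x\<in>cube n. if drop_coord i x \<in> S then g x else 0)"
      unfolding q sqnorm_def sum_subtractf[symmetric]
      by (rule sum.cong) (auto simp: E_map_def g_def algebra_simps)
    also have "\<dots> = sum g T"
      using fin by (simp add: sum.inter_filter T_def)
    finally show ?thesis .
  qed
  have fT: "x \<in> T \<Longrightarrow> flip i x \<in> T" for x
    using flip_cube drop_flip[OF i1] by (auto simp: T_def)
  have re: "sum g T = (\<Sum>x\<in>T. g (flip i x))"
    by (rule sum.reindex_bij_witness[where i="flip i" and j="flip i"])
       (auto simp: flip_flip fT)
  have "2 * sum g T = (\<Sum>x\<in>T. g x + g (flip i x))"
    using re by (simp add: sum.distrib)
  also have "\<dots> = (\<Sum>x\<in>T. - complex_of_real ((cmod (\<phi> x - \<phi> (flip i x)))\<^sup>2))"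
  proof (rule sum.cong[OF refl])
    fix x
    have "g x + g (flip i x) = - (cnj (\<phi> x - \<phi> (flip i x)) * (\<phi> x - \<phi> (flip i x)))"
      by (simp add: g_def flip_flip algebra_simps)
    also have "\<dots> = - complex_of_real ((cmod (\<phi> x - \<phi> (flip i x)))\<^sup>2)"
      using complex_norm_square[of "\<phi> x - \<phi> (flip i x)"] by (simp only: mult.commute)
    finally show "g x + g (flip i x) = - complex_of_real ((cmod (\<phi> x - \<phi> (flip i x)))\<^sup>2)" .
  qed
  finally have "2 * sum g T = - complex_of_real (\<Sum>x\<in>T. (cmod (\<phi> x - \<phi> (flip i x)))\<^sup>2)"
    by (simp add: sum_negf)
  hence "cmod (sum g T) = (\<Sum>x\<in>T. (cmod (\<phi> x - \<phi> (flip i x)))\<^sup>2) / 2"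
  proof -
    assume h: "2 * sum g T = - complex_of_real (\<Sum>x\<in>T. (cmod (\<phi> x - \<phi> (flip i x)))\<^sup>2)"
    have "2 * cmod (sum g T) = cmod (2 * sum g T)" by (simp add: norm_mult)
    also have "\<dots> = cmod (- complex_of_real (\<Sum>x\<in>T. (cmod (\<phi> x - \<phi> (flip i x)))\<^sup>2))"
      using h by (rule arg_cong)
    also have "\<dots> = \<bar>\<Sum>x\<in>T. (cmod (\<phi> x - \<phi> (flip i x)))\<^sup>2\<bar>"
      by (rule trans[OF norm_minus_cancel norm_of_real])
    also have "\<dots> = (\<Sum>x\<in>T. (cmod (\<phi> x - \<phi> (flip i x)))\<^sup>2)"
      by (simp add: sum_nonneg)
    finally show ?thesis by linarith
  qed
  also have "\<dots> \<le> (\<Sum>x\<in>cube n. (cmod (\<phi> x - \<phi> (flip i x)))\<^sup>2) / 2"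
    using fin by (intro divide_right_mono sum_mono2) (auto simp: T_def)
  also have "\<dots> = 2 ^ (n - 1) * influence n i \<phi>"
  proof -
    have "(2::real) ^ n = 2 * 2 ^ (n - 1)" using assms(1)
      by (cases n) auto
    thus ?thesis by (simp add: influence_def)
  qed
  finally show ?thesis unfolding d .
qed

end
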